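(* Let $n=2$, $\Gamma=I_2$, $\Sigma=\begin{pmatrix}1&\rho\\ \rho&1\end{pmatrix}$ with $\rho\in(-1,1)$, and $M=\begin{pmatrix}M_{11}&M_{12}\\ M_{21}&M_{22}\end{pmatrix}$ arbitrary. Let $\kappa=\rho(M_{11}+M_{22})-(M_{12}+M_{21})$ and let $\Delta$ be the Nash equilibrium (matrix of deviations of negotiating positions from true beliefs). (1) If only agent $k$ is strategic ($S=\{k\}$), then $\Delta_{ij}=\kappa/3$ if $i\neq k$ and $j=k$, and $\Delta_{ij}=0$ otherwise. (2) If both agents are strategic ($S=\{1,2\}$), then $\Delta_{ij}=\kappa/4$ if $i\neq j$ and $\Delta_{ii}=0$.
   Context: Fix agents $[n]=\{1,\dots,n\}$. Let $\Sigma\in\mathbb{R}^{n\times n}$ be symmetric positive definite, $\Gamma=\mathrm{diag}(\gamma_1,\dots,\gamma_n)$ with all $\gamma_i>0$, and let $M\in\mathbb{R}^{n\times n}$ be the matrix of true beliefs with $i$-th column $\mu_i=Me_i$. For a matrix of reported negotiating positions $M'\in\mathbb{R}^{n\times n}$, the stable point for $M'$ is the unique pair $(W,P)$ of real $n\times n$ matrices with $W=W^T$, $P^T=-P$ and $M'-P=2\Sigma W\Gamma$. Agent $i$'s (true) utility is $g_i(W,P)=w_i^T(\mu_i-Pe_i)-\gamma_i\, w_i^T\Sigma w_i$, $w_i=We_i$. $S\subseteq[n]$ is the set of strategic agents; honest agents $i\notin S$ report $\mu_i'=\mu_i$, and each $k\in S$ reports $\mu_k'=\mu_k+\Delta e_k$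 with arbitrary $\Delta e_k\in\mathbb{R}^n$. A Nash equilibrium is a matrix $\Delta$ with $\Delta e_j=0$ for $j\notin S$ such that for each $k\in S$, given the other columns, the column $\Delta e_k$ maximizes $g_k$ at the stable point for $M+\Delta$. *)

theory Defs
  imports "HOL-Analysis.Analysis"
begin

text \<open>Matrices are indexed A $ i $ j = entry in row i, column j; the i-th column is A *v axis i 1.\<close>

definition stable_point ::
  "real^'n^'n \<Rightarrow> real^'n^'n \<Rightarrow> real^'n^'n \<Rightarrow> real^'n^'n \<Rightarrow> real^'n^'n \<Rightarrow> bool" where
  "stable_point Sig Gam M' W P \<longleftrightarrow>
     transpose W = W \<and> transpose P = - P \<and> M' - P = 2 *\<^sub>R (Sig ** W ** Gam)"

definition stable_pair :: "real^'n^'n \<Rightarrow> real^'n^'n \<Rightarrow> real^'n^'n \<Rightarrow> (real^'n^'n) \<times> (real^'n^'n)" where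
  "stable_pair Sig Gam M' = (THE (W, P). stable_point Sig Gam M' W P)"

definition utility ::
  "real^'n^'n \<Rightarrow> real^'n^'n \<Rightarrow> real^'n^'n \<Rightarrow> 'n \<Rightarrow> real^'n^'n \<Rightarrow> real^'n^'n \<Rightarrow> real" where
  "utility Sig Gam M i W P =
     (let w = W *v axis i 1 in
       w \<bullet> (M *v axis i 1 - P *v axis i 1) - Gam $ i $ i * (w \<bullet> (Sig *v w)))"

definition payoff :: "real^'n^'n \<Rightarrow> real^'n^'n \<Rightarrow> real^'n^'n \<Rightarrow> 'n \<Rightarrow> real^'n^'n \<Rightarrow> real" where
  "payoff Sig Gam M i D =
     (case stable_pair Sig Gam (M + D) of (W, P) \<Rightarrow> utility Sig Gam M i W P)"

definition replace_col :: "real^'n^'n \<Rightarrow> 'n \<Rightarrow> real^'n \<Rightarrow> real^'n^'n" where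
  "replace_col D k d = (\<chi> i j. if j = k then d $ i else D $ i $ j)"

definition nash_equilibrium ::
  "real^'n^'n \<Rightarrow> real^'n^'n \<Rightarrow> real^'n^'n \<Rightarrow> 'n set \<Rightarrow> real^'n^'n \<Rightarrow> bool" where
  "nash_equilibrium Sig Gam M S D \<longleftrightarrow>
     (\<forall>j. j \<notin> S \<longrightarrow> D *v axis j 1 = 0) \<and>
     (\<forall>k\<in>S. \<forall>d. payoff Sig Gam M k (replace_col D k d) \<le> payoff Sig Gam M k D)"

end

theory Submission imports Defs begin

definition Fg :: "real \<Rightarrow> real \<Rightarrow> real \<Rightarrow> real \<Rightarrow> real \<Rightarrow> real \<Rightarrow> real \<Rightarrow> real" where
"Fg r m1 m2 y1 y2 u v = (let
   wb = (y1 + (m2+v) - r*((m1+u)+y2))/(4*(1-r^2)) in let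
   wa = (m1+u)/2 - r*wb in let
   pq = (y1 - (m2+v) + r*((m1+u) - y2))/2
   in wa*m1 + wb*(m2+pq) - (wa*(wa + r*wb) + wb*(r*wa + wb)))"

lemma keyid:
  fixes m1 a0 r b0 K s a b :: real
  assumes "m1 = 2*a0 + 2*r*b0" "K = 2*r*a0 + 2*(1+2* s)*b0"
  shows "(a0*m1 + b0*K - a0*a0 - 2*r*a0*b0 - (1+2* s)*b0*b0) - (a*m1 + b*K - a*a - 2*r*a*b - (1+2* s)*b*b)
     = (a-a0)^2 + 2*r*(a-a0)*(b-b0) + (1+2* s)*(b-b0)^2"
  unfolding assms by (simp add: algebra_simps power2_eq_square)

lemma gen_opt:
  fixes r m1 m2 y1 y2 u v :: real
  assumes "-1 < r" "r < 1"
  defines "vs \<equiv> (r*(m1+y2) - m2 - y1)/3"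
  shows "Fg r m1 m2 y1 y2 u v \<le> Fg r m1 m2 y1 y2 0 vs"
    and "Fg r m1 m2 y1 y2 u v = Fg r m1 m2 y1 y2 0 vs \<Longrightarrow> u = 0 \<and> v = vs"
proof -
  define s where "s = 1 - r^2"
  have s: "s > 0" using assms unfolding s_def
    using abs_square_less_1[of r] by (simp add: abs_less_iff)
  define K where "K = m2 + y1 - r*y2"
  define G where "G a b = a*m1 + b*K - a*a - 2*r*a*b - (1+2* s)*b*b" for a b
  define wb where "wb = (y1 + (m2+v) - r*((m1+u)+y2))/(4* s)"
  define wa where "wa = (m1+u)/2 - r*wb"
  define wb0 where "wb0 = (y1 + (m2+vs) - r*((m1+0)+y2))/(4* s)"
  define wa0 where "wa0 = (m1+0)/2 - r*wb0"
  have pq1: "(y1 - (m2+v) + r*((m1+u) - y2))/2 = K - m2 - 2 * s * wb"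
    unfolding wb_def K_def using s by (simp add: field_simps)
  have pq2: "(y1 - (m2+vs) + r*((m1+0) - y2))/2 = K - m2 - 2 * s * wb0"
    unfolding wb0_def K_def using s by (simp add: field_simps)
  have F1: "Fg r m1 m2 y1 y2 u v = G wa wb"
    unfolding Fg_def Let_def s_def[symmetric] wb_def[symmetric] wa_def[symmetric] pq1
    unfolding G_def by (simp add: algebra_simps)
  have F2: "Fg r m1 m2 y1 y2 0 vs = G wa0 wb0"
    unfolding Fg_def Let_def s_def[symmetric] wb0_def[symmetric] pq2
    unfolding G_def wa0_def by (simp add: algebra_simps)
  have wb0': "6* s*wb0 = K - r*m1" unfolding wb0_def vs_def K_def using s
    by (simp add: field_simps)
  have foc1: "m1 = 2*wa0 + 2*r*wb0" unfolding wa0_def by simp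
  have foc2: "K = 2*r*wa0 + 2*(1+2* s)*wb0" using wb0' foc1 unfolding s_def
    by (simp add: algebra_simps power2_eq_square)
  have key: "G wa0 wb0 - G wa wb = ((wa-wa0) + r*(wb-wb0))^2 + 3* s*(wb-wb0)^2"
  proof -
    have "G wa0 wb0 - G wa wb = (wa-wa0)^2 + 2*r*(wa-wa0)*(wb-wb0) + (1+2* s)*(wb-wb0)^2"
      unfolding G_def using keyid[of m1 wa0 r wb0 K s wa wb] foc1 foc2 by simp
    also have "... = ((wa-wa0) + r*(wb-wb0))^2 + 3* s*(wb-wb0)^2"
      unfolding s_def by (simp add: algebra_simps power2_eq_square)
    finally show ?thesis .
  qed
  have nn: "((wa-wa0) + r*(wb-wb0))^2 + 3* s*(wb-wb0)^2 \<ge> 0" using s by simp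
  show "Fg r m1 m2 y1 y2 u v \<le> Fg r m1 m2 y1 y2 0 vs"
    using key nn F1 F2 by linarith
  assume eq: "Fg r m1 m2 y1 y2 u v = Fg r m1 m2 y1 y2 0 vs"
  hence "((wa-wa0) + r*(wb-wb0))^2 + 3* s*(wb-wb0)^2 = 0" using key F1 F2 by linarith
  moreover have "0 \<le> ((wa-wa0) + r*(wb-wb0))^2" by simp
  moreover have "0 \<le> 3* s*(wb-wb0)^2" using s by simp
  ultimately have e1: "3* s*(wb-wb0)^2 = 0" and e2: "((wa-wa0) + r*(wb-wb0))^2 = 0" by linarith+
  from e1 s have z1: "wb = wb0" by simp
  from e2 z1 have z2: "wa = wa0" by simp
  note z = z1 z2
  have "wa - wa0 = u/2" using z unfolding wa_def wa0_def by simp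
  hence u: "u = 0" using z by simp
  have "4* s*(wb - wb0) = (v - vs) - r*u" unfolding wb_def wb0_def using s
    by (simp add: field_simps)
  thus "u = 0 \<and> v = vs" using z u by simp
qed


lemma gen_nash:
  fixes r m1 m2 y1 y2 u0 v0 :: real
  assumes "-1 < r" "r < 1"
  shows "(\<forall>d::real^2. Fg r m1 m2 y1 y2 (d$1) (d$2) \<le> Fg r m1 m2 y1 y2 u0 v0)
     \<longleftrightarrow> u0 = 0 \<and> v0 = (r*(m1+y2) - m2 - y1)/3"
proof
  assume h: "\<forall>d::real^2. Fg r m1 m2 y1 y2 (d$1) (d$2) \<le> Fg r m1 m2 y1 y2 u0 v0"
  define vs where "vs = (r*(m1+y2) - m2 - y1)/3"
  have "Fg r m1 m2 y1 y2 0 vs \<le> Fg r m1 m2 y1 y2 u0 v0"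
    using h[rule_format, of "vector [0, vs]"] by simp
  moreover have "Fg r m1 m2 y1 y2 u0 v0 \<le> Fg r m1 m2 y1 y2 0 vs"
    using gen_opt(1)[OF assms] unfolding vs_def by blast
  ultimately show "u0 = 0 \<and> v0 = (r*(m1+y2) - m2 - y1)/3"
    using gen_opt(2)[OF assms, of m1 m2 y1 y2 u0 v0] unfolding vs_def by linarith
next
  assume "u0 = 0 \<and> v0 = (r*(m1+y2) - m2 - y1)/3"
  thus "\<forall>d::real^2. Fg r m1 m2 y1 y2 (d$1) (d$2) \<le> Fg r m1 m2 y1 y2 u0 v0"
    using gen_opt(1)[OF assms] by blast
qed

lemma mv_axis: "((A::real^'n^'m) *v axis j 1) $ i = A $ i $ j"
proof -
  have "(\<lambda>ja. A$i$ja * (if ja = j then 1 else 0)) = (\<lambda>ja. if ja = j then A$i$ja else 0)" by auto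
  thus ?thesis by (simp add: matrix_vector_mult_def axis_def if_distrib sum.If_cases)
qed

definition qbf :: "real \<Rightarrow> real^2^2 \<Rightarrow> real" where
  "qbf r X = (X$1$2 + X$2$1 - r*(X$1$1 + X$2$2))/(4*(1-r^2))"
definition pff :: "real \<Rightarrow> real^2^2 \<Rightarrow> real" where
  "pff r X = (X$1$2 - X$2$1 + r*(X$1$1 - X$2$2))/2"
definition Wf :: "real \<Rightarrow> real^2^2 \<Rightarrow> real^2^2" where
  "Wf r X = (\<chi> i j. if i = j then X$i$i/2 - r * qbf r X else qbf r X)"
definition Pf :: "real \<Rightarrow> real^2^2 \<Rightarrow> real^2^2" where
  "Pf r X = (\<chi> i j. if i = j then 0 else if i = 1 then pff r X else - pff r X)"

lemma stable2:
  fixes r :: real and X :: "real^2^2"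
  assumes "-1 < r" "r < 1"
  shows "stable_pair ((\<chi> i j. if i = j then 1 else r) :: real^2^2) (mat 1) X = (Wf r X, Pf r X)"
proof -
  define Sig where "Sig = ((\<chi> i j. if i = j then 1 else r) :: real^2^2)"
  have s: "1 - r^2 > 0"
    using abs_square_less_1[of r] assms by (simp add: abs_less_iff)
  have ex: "stable_point Sig (mat 1) X (Wf r X) (Pf r X)"
  proof -
    have t1: "transpose (Wf r X) = Wf r X"
      by (simp add: vec_eq_iff forall_2 transpose_def Wf_def)
    have t2: "transpose (Pf r X) = - Pf r X"
      by (simp add: vec_eq_iff forall_2 transpose_def Pf_def)
    have hsb: "4*qbf r X - 4*(r*r*qbf r X) = X$1$2 + X$2$1 - r*X$1$1 - r*X$2$2"
    proof -
      have "4*(1-r^2)*qbf r X = X$1$2 + X$2$1 - r*(X$1$1 + X$2$2)"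
        unfolding qbf_def using s by simp
      thus ?thesis by (simp add: algebra_simps power2_eq_square)
    qed
    have hpf: "2*pff r X = X$1$2 - X$2$1 + r*X$1$1 - r*X$2$2" unfolding pff_def by (simp add: right_diff_distrib)
    have "X$1$2 - pff r X = 2 * (qbf r X + r * (X$2$2/2 - r * qbf r X))"
      using hsb hpf by (simp add: algebra_simps)
    moreover have "X$2$1 + pff r X = 2 * (r * (X$1$1/2 - r * qbf r X) + qbf r X)"
      using hsb hpf by (simp add: algebra_simps)
    ultimately have t3': "X - Pf r X = 2 *\<^sub>R (Sig ** Wf r X)"
      by (simp add: vec_eq_iff forall_2 Pf_def Wf_def Sig_def matrix_matrix_mult_def sum_2 algebra_simps)
    have t3: "X - Pf r X = 2 *\<^sub>R (Sig ** Wf r X ** mat 1)"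
      using t3' by (simp add: matrix_mul_rid)
    show ?thesis using t1 t2 t3 unfolding stable_point_def by blast
  qed
  have un: "W = Wf r X \<and> P = Pf r X" if h: "stable_point Sig (mat 1) X W P" for W P
  proof -
    have h1: "transpose W = W" and h2: "transpose P = - P" and h3: "X - P = 2 *\<^sub>R (Sig ** W)"
      using h unfolding stable_point_def by (auto simp: matrix_mul_rid)
    have tw: "W$j$i = W$i$j" for i j
    proof -
      have "(transpose W)$i$j = W$i$j" using h1 by simp
      thus ?thesis by (simp add: transpose_def)
    qed
    have tp: "P$j$i = - P$i$j" for i j
    proof -
      have "(transpose P)$i$j = (-P)$i$j" using h2 by simp
      thus ?thesis by (simp add: transpose_def)
    qed
    have w21: "W$2$1 = W$1$2" using tw .
    have p11: "P$1$1 = 0" using tp[of 1 1] by linarith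
    have p22: "P$2$2 = 0" using tp[of 2 2] by linarith
    have p21: "P$2$1 = - P$1$2" using tp .
    have g: "X$i$j - P$i$j = 2 * (Sig$i$1 * W$1$j + Sig$i$2 * W$2$j)" for i j
    proof -
      have "(X - P)$i$j = (2 *\<^sub>R (Sig ** W))$i$j" using h3 by simp
      thus ?thesis by (simp add: matrix_matrix_mult_def sum_2)
    qed
    have S: "Sig$1$1 = 1" "Sig$2$2 = 1" "Sig$1$2 = r" "Sig$2$1 = r" unfolding Sig_def by simp_all
    define a where "a = W$1$1"
    define b where "b = W$1$2"
    define c where "c = W$2$2"
    define p where "p = P$1$2"
    have e11: "X$1$1 = 2*a + 2*r*b" using g[of 1 1] unfolding S p11 w21 a_def b_def by simp
    have e12: "X$1$2 - p = 2*b + 2*r*c" using g[of 1 2] unfolding S b_def c_def p_def by simp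
    have e21: "X$2$1 + p = 2*r*a + 2*b" using g[of 2 1] unfolding S p21 w21 a_def b_def p_def by simp
    have e22: "X$2$2 = 2*r*b + 2*c" using g[of 2 2] unfolding S p22 w21 b_def c_def by simp
    have r1: "r*X$1$1 = 2*r*a + 2*(r*r*b)" using e11 by (simp add: algebra_simps)
    have r2: "r*X$2$2 = 2*(r*r*b) + 2*r*c" using e22 by (simp add: algebra_simps)
    have "4*b - 4*(r*r*b) = X$1$2 + X$2$1 - r*X$1$1 - r*X$2$2"
      using r1 r2 e12 e21 by linarith
    hence "4*(1-r^2)*b = X$1$2 + X$2$1 - r*(X$1$1 + X$2$2)"
      by (simp add: algebra_simps power2_eq_square)
    hence bv: "b = qbf r X" unfolding qbf_def using s
      by (simp add: eq_divide_eq mult.commute)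
    have "2*p = X$1$2 - X$2$1 + r*X$1$1 - r*X$2$2"
      using r1 r2 e12 e21 by linarith
    hence pv: "p = pff r X" unfolding pff_def by (simp add: algebra_simps)
    have av: "a = X$1$1/2 - r * qbf r X" using e11[unfolded bv] by linarith
    have cv: "c = X$2$2/2 - r * qbf r X" using e22[unfolded bv] by linarith
    have W: "W = Wf r X"
    proof -
      have "W$i$j = Wf r X $i$j" for i j
        using exhaust_2[of i] exhaust_2[of j] av bv cv w21 unfolding a_def b_def c_def Wf_def
        by auto
      thus ?thesis by (simp add: vec_eq_iff)
    qed
    have P: "P = Pf r X"
    proof -
      have "P$i$j = Pf r X $i$j" for i j
        using exhaust_2[of i] exhaust_2[of j] pv p11 p22 p21 unfolding p_def Pf_def
        by auto
      thus ?thesis by (simp add: vec_eq_iff)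
    qed
    show ?thesis using W P by simp
  qed
  show ?thesis unfolding stable_pair_def Sig_def[symmetric]
  proof (rule the_equality)
    show "case (Wf r X, Pf r X) of (W, P) \<Rightarrow> stable_point Sig (mat 1) X W P" using ex by simp
  next
    fix x assume hx: "case x of (W, P) \<Rightarrow> stable_point Sig (mat 1) X W P"
    obtain W P where x: "x = (W, P)" by (cases x)
    have "stable_point Sig (mat 1) X W P" using hx x by simp
    thus "x = (Wf r X, Pf r X)" using un x by simp
  qed
qed


lemma Fg_alt:
  assumes "wb0 = (y1 + (m2+v) - r*((m1+u)+y2))/(4*(1-r^2))"
    and "pq0 = (y1 - (m2+v) + r*((m1+u) - y2))/2"
  shows "Fg r m1 m2 y1 y2 u v = ((m1+u)/2 - r*wb0)*m1 + wb0*(m2+pq0)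
     - (((m1+u)/2 - r*wb0)*(((m1+u)/2 - r*wb0) + r*wb0) + wb0*(r*((m1+u)/2 - r*wb0) + wb0))"
  using assms by (simp add: Fg_def Let_def)

lemma payoff1:
  fixes r :: real and M D :: "real^2^2"
  assumes "-1 < r" "r < 1"
  shows "payoff ((\<chi> i j. if i = j then 1 else r) :: real^2^2) (mat 1) M 1 D
     = Fg r (M$1$1) (M$2$1) (M$1$2 + D$1$2) (M$2$2 + D$2$2) (D$1$1) (D$2$1)"
proof -
  have q: "qbf r (M+D) = ((M$1$2 + D$1$2) + (M$2$1 + D$2$1) - r*((M$1$1 + D$1$1) + (M$2$2 + D$2$2)))/(4*(1-r^2))"
    by (simp add: qbf_def)
  have p: "pff r (M+D) = ((M$1$2 + D$1$2) - (M$2$1 + D$2$1) + r*((M$1$1 + D$1$1) - (M$2$2 + D$2$2)))/2"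
    by (simp add: pff_def)
  show ?thesis
    unfolding payoff_def stable2[OF assms] Fg_alt[OF q p]
    by (simp add: utility_def Let_def inner_vec_def sum_2 mv_axis matrix_vector_mult_def
        Wf_def Pf_def mat_def axis_def algebra_simps)
qed

lemma payoff2:
  fixes r :: real and M D :: "real^2^2"
  assumes "-1 < r" "r < 1"
  shows "payoff ((\<chi> i j. if i = j then 1 else r) :: real^2^2) (mat 1) M 2 D
     = Fg r (M$2$2) (M$1$2) (M$2$1 + D$2$1) (M$1$1 + D$1$1) (D$2$2) (D$1$2)"
proof -
  have q: "qbf r (M+D) = ((M$2$1 + D$2$1) + (M$1$2 + D$1$2) - r*((M$2$2 + D$2$2) + (M$1$1 + D$1$1)))/(4*(1-r^2))"
    by (simp add: qbf_def add_ac)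
  have p: "- pff r (M+D) = ((M$2$1 + D$2$1) - (M$1$2 + D$1$2) + r*((M$2$2 + D$2$2) - (M$1$1 + D$1$1)))/2"
    by (simp add: pff_def field_simps)
  show ?thesis
    unfolding payoff_def stable2[OF assms] Fg_alt[OF q p]
    by (simp add: utility_def Let_def inner_vec_def sum_2 mv_axis matrix_vector_mult_def
        Wf_def Pf_def mat_def axis_def algebra_simps)
qed


lemma col_zero: "((D::real^2^2) *v axis j 1 = 0) \<longleftrightarrow> D$1$j = 0 \<and> D$2$j = 0"
  by (simp add: vec_eq_iff forall_2 mv_axis)

lemma nash1:
  fixes r :: real and M D :: "real^2^2"
  assumes "-1 < r" "r < 1"
  shows "(\<forall>d. payoff ((\<chi> i j. if i = j then 1 else r) :: real^2^2) (mat 1) M 1 (replace_col D 1 d)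
            \<le> payoff ((\<chi> i j. if i = j then 1 else r) :: real^2^2) (mat 1) M 1 D)
     \<longleftrightarrow> D$1$1 = 0 \<and> D$2$1 = (r*(M$1$1 + (M$2$2 + D$2$2)) - M$2$1 - (M$1$2 + D$1$2))/3"
  unfolding payoff1[OF assms] using gen_nash[OF assms]
  by (simp add: replace_col_def)

lemma nash2:
  fixes r :: real and M D :: "real^2^2"
  assumes "-1 < r" "r < 1"
  shows "(\<forall>d. payoff ((\<chi> i j. if i = j then 1 else r) :: real^2^2) (mat 1) M 2 (replace_col D 2 d)
            \<le> payoff ((\<chi> i j. if i = j then 1 else r) :: real^2^2) (mat 1) M 2 D)
     \<longleftrightarrow> D$2$2 = 0 \<and> D$1$2 = (r*(M$2$2 + (M$1$1 + D$1$1)) - M$1$2 - (M$2$1 + D$2$1))/3"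
proof -
  have e: "(\<forall>d::real^2. P (d$1) (d$2)) \<longleftrightarrow> (\<forall>d::real^2. P (d$2) (d$1))" for P
  proof
    assume h: "\<forall>d::real^2. P (d$1) (d$2)"
    show "\<forall>d::real^2. P (d$2) (d$1)"
    proof
      fix d :: "real^2"
      show "P (d$2) (d$1)" using h[rule_format, of "vector [d$2, d$1]"] by simp
    qed
  next
    assume h: "\<forall>d::real^2. P (d$2) (d$1)"
    show "\<forall>d::real^2. P (d$1) (d$2)"
    proof
      fix d :: "real^2"
      show "P (d$1) (d$2)" using h[rule_format, of "vector [d$2, d$1]"] by simp
    qed
  qed
  show ?thesis
    unfolding payoff2[OF assms]
    using gen_nash[OF assms, of "M$2$2" "M$1$2" "M$2$1 + D$2$1" "M$1$1 + D$1$1" "D$2$2" "D$1$2"]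
      e[of "\<lambda>a b. Fg r (M$2$2) (M$1$2) (M$2$1 + D$2$1) (M$1$1 + D$1$1) a b
         \<le> Fg r (M$2$2) (M$1$2) (M$2$1 + D$2$1) (M$1$1 + D$1$1) (D$2$2) (D$1$2)"]
    by (simp add: replace_col_def)
qed

theorem mainTheorem10:
  fixes rho :: real and M :: "real^2^2" and k :: 2
  assumes "-1 < rho" and "rho < 1"
  defines "Sig \<equiv> (\<chi> i j. if i = j then 1 else rho) :: real^2^2"
    and "Gam \<equiv> mat 1 :: real^2^2"
    and "kappa \<equiv> rho * (M $ 1 $ 1 + M $ 2 $ 2) - (M $ 1 $ 2 + M $ 2 $ 1)"
  shows "(\<forall>D. nash_equilibrium Sig Gam M {k} D \<longleftrightarrow>
             D = (\<chi> i j. if i \<noteq> k \<and> j = k then kappa / 3 else 0))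
       \<and> (\<forall>D. nash_equilibrium Sig Gam M {1, 2} D \<longleftrightarrow>
             D = (\<chi> i j. if i \<noteq> j then kappa / 4 else 0))"
proof -
  have ball: "(\<forall>k\<in>S. P k) \<longleftrightarrow> ((1::2) \<in> S \<longrightarrow> P 1) \<and> ((2::2) \<in> S \<longrightarrow> P 2)" for S P
    by (metis exhaust_2)
  have N: "nash_equilibrium Sig Gam M S D \<longleftrightarrow>
     ((1::2) \<notin> S \<longrightarrow> D$1$1 = 0 \<and> D$2$1 = 0) \<and> ((2::2) \<notin> S \<longrightarrow> D$1$2 = 0 \<and> D$2$2 = 0) \<and>
     ((1::2) \<in> S \<longrightarrow> D$1$1 = 0 \<and> D$2$1 = (rho*(M$1$1 + (M$2$2 + D$2$2)) - M$2$1 - (M$1$2 + D$1$2))/3) \<and>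
     ((2::2) \<in> S \<longrightarrow> D$2$2 = 0 \<and> D$1$2 = (rho*(M$2$2 + (M$1$1 + D$1$1)) - M$1$2 - (M$2$1 + D$2$1))/3)"
    for S D
    unfolding nash_equilibrium_def ball forall_2 col_zero Sig_def Gam_def
      nash1[OF assms(1,2)] nash2[OF assms(1,2)] by blast
  have one: "nash_equilibrium Sig Gam M {k} D \<longleftrightarrow>
             D = (\<chi> i j. if i \<noteq> k \<and> j = k then kappa / 3 else 0)" for D
  proof (cases "k = 1")
    case True
    show ?thesis unfolding N True
      by (simp add: vec_eq_iff forall_2 kappa_def) (auto simp: algebra_simps)
  next
    case False
    hence k2: "k = 2" by (metis exhaust_2)
    show ?thesis unfolding N k2
      by (simp add: vec_eq_iff forall_2 kappa_def) (auto simp: algebra_simps)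
  qed
  have two: "nash_equilibrium Sig Gam M {1, 2} D \<longleftrightarrow>
             D = (\<chi> i j. if i \<noteq> j then kappa / 4 else 0)" for D
  proof -
    have "nash_equilibrium Sig Gam M {1, 2} D \<longleftrightarrow>
       D$1$1 = 0 \<and> D$2$2 = 0 \<and>
       D$2$1 = (rho*(M$1$1 + (M$2$2 + D$2$2)) - M$2$1 - (M$1$2 + D$1$2))/3 \<and>
       D$1$2 = (rho*(M$2$2 + (M$1$1 + D$1$1)) - M$1$2 - (M$2$1 + D$2$1))/3"
      unfolding N by auto
    also have "\<dots> \<longleftrightarrow> D$1$1 = 0 \<and> D$2$2 = 0 \<and> D$1$2 = kappa/4 \<and> D$2$1 = kappa/4"
    proof -
      have "D$2$1 = (rho*(M$1$1 + (M$2$2 + 0)) - M$2$1 - (M$1$2 + D$1$2))/3 \<and>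
            D$1$2 = (rho*(M$2$2 + (M$1$1 + 0)) - M$1$2 - (M$2$1 + D$2$1))/3
         \<longleftrightarrow> D$1$2 = kappa/4 \<and> D$2$1 = kappa/4"
        unfolding kappa_def by (auto simp: field_simps)
      thus ?thesis by auto
    qed
    also have "\<dots> \<longleftrightarrow> D = (\<chi> i j. if i \<noteq> j then kappa / 4 else 0)"
      by (auto simp: vec_eq_iff forall_2)
    finally show ?thesis .
  qed
  show ?thesis using one two by blast
qed

end
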